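(* Let $\bar A=I_{N_sN_t}$. Assume there is $L_f>0$ with $\|f(w,t)-f(y,t)\|_2\le L_f\|w-y\|_2$ for all $w,y\in\mathbb{R}^{N_s}$, $t\in[0,T]$, and $\Delta t<\sigma_{\min}(A_{LM})/(L_f\sigma_{\max}(B_{LM}))$. Let $x\in\mathbb{R}^{N_sN_t}$ satisfy $\bar r(x)=0$ and $\tilde x\in\arg\min_{w\in\mathcal{S}}\|\bar r(w)\|_2$. Define $$\Lambda:=\frac{\sigma_{\max}(A_{LM})-\sigma_{\min}(A_{LM})+2\Delta t L_f\sigma_{\max}(B_{LM})}{\sigma_{\min}(A_{LM})-\Delta t L_f\sigma_{\max}(B_{LM})}.$$ Then $\|x-\tilde x\|_2\le(1+\Lambda)\min_{w\in\mathcal{S}}\|x-w\|_2$ and $\max_{1\le n\le N_t}\|x^n-\tilde x^n\|_2\le\sqrt{N_t}(1+\Lambda)\min_{w\in\mathcal{S}}\max_{1\le n\le N_t}\|x^n-w^n\|_2$.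
   Context: Let $f:\mathbb{R}^{N_s}\times[0,T]\to\mathbb{R}^{N_s}$ be the velocity of the ODE $\dot x=f(x,t)$, $x(0)=x^0\in\mathbb{R}^{N_s}$. Use a uniform time grid $t^n=n\Delta t$, $n=0,\dots,N_t$, $\Delta t=T/N_t$. A linear multistep scheme is given by integers $k(n)\le n$ and coefficients $\alpha_j^n,\beta_j^n\in\mathbb{R}$, $j=0,\dots,k(n)$, $n=1,\dots,N_t$, with $\alpha_0^n\neq0$. For $w=(w^1,\dots,w^{N_t})\in\mathbb{R}^{N_sN_t}$ (blocks $w^n\in\mathbb{R}^{N_s}$) set $w^0:=x^0$ and define the residual at step $n$ by $r^n(w)=\sum_{j=0}^{k(n)}\alpha_j^n w^{n-j}-\Delta t\sum_{j=0}^{k(n)}\beta_j^n f(w^{n-j},t^{n-j})$, and the space–time residual $\bar r(w)=(r^1(w),\dots,r^{N_t}(w))\in\mathbb{R}^{N_sN_t}$. Let $A_{LM},B_{LM}\in\mathbb{R}^{N_sN_t\times N_sN_t}$ be the block lower-triangular matrices (blocks of size $N_s\times N_s$) whose $(n,n-j)$ block is $\alpha_j^n I_{N_s}$, resp. $\beta_j^n I_{N_s}$, for $0\le j\le k(n)$ with $n-j\ge1$, and zero otherwise. $\sigma_{\max}(M)$, $\sigma_{\min}(M)$ denote the largest and smallest singular values of $M$; $\|\cdot\|_2$ is the Euclidean norm on $\mathbb{R}^{N_sN_t}$. The space–time trial subspace is the affine subspace $\mathcal{S}=\{(x^0,\dots,x^0)+\sum_{i=1}^{n_{st}}c_i\pi_i: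 c\in\mathbb{R}^{n_{st}}\}\subseteq\mathbb{R}^{N_sN_t}$ for given vectors $\pi_1,\dots,\pi_{n_{st}}\in\mathbb{R}^{N_sN_t}$. *)

theory Defs
  imports "HOL-Analysis.Analysis"
begin

text \<open>Space-time vectors in R^(Ns*Nt) are represented block-wise as functions
  w :: nat => real^'s, where block n (1 <= n <= Nt) is w n and Ns = CARD('s).
  Only the blocks 1..Nt are relevant.\<close>

definition st_norm :: "nat \<Rightarrow> (nat \<Rightarrow> real^'s) \<Rightarrow> real" where
  "st_norm Nt w = sqrt (\<Sum>n=1..Nt. (norm (w n))\<^sup>2)"

definition st_vec :: "nat \<Rightarrow> (nat \<Rightarrow> real^'s) \<Rightarrow> bool" where
  "st_vec Nt v \<longleftrightarrow> (\<forall>n. n \<notin> {1..Nt} \<longrightarrow> v n = 0)"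

text \<open>Block matrix whose (n,m) block is (c n m) I_Ns, applied to a space-time vector,
  and its transpose applied to a space-time vector.\<close>

definition blk_apply :: "nat \<Rightarrow> (nat \<Rightarrow> nat \<Rightarrow> real) \<Rightarrow> (nat \<Rightarrow> real^'s) \<Rightarrow> (nat \<Rightarrow> real^'s)" where
  "blk_apply Nt c w = (\<lambda>n. if n \<in> {1..Nt} then (\<Sum>m=1..Nt. c n m *\<^sub>R w m) else 0)"

definition blk_tapply :: "nat \<Rightarrow> (nat \<Rightarrow> nat \<Rightarrow> real) \<Rightarrow> (nat \<Rightarrow> real^'s) \<Rightarrow> (nat \<Rightarrow> real^'s)" where
  "blk_tapply Nt c w = (\<lambda>n. if n \<in> {1..Nt} then (\<Sum>m=1..Nt. c m n *\<^sub>R w m) else 0)"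

definition gram_eigenvalue :: "'s::finite itself \<Rightarrow> nat \<Rightarrow> (nat \<Rightarrow> nat \<Rightarrow> real) \<Rightarrow> real \<Rightarrow> bool" where
  "gram_eigenvalue _ Nt c lam \<longleftrightarrow>
     (\<exists>v :: nat \<Rightarrow> real^'s. st_vec Nt v \<and> v \<noteq> (\<lambda>_. 0) \<and>
        blk_tapply Nt c (blk_apply Nt c v) = (\<lambda>n. lam *\<^sub>R v n))"

definition sigma_max :: "'s::finite itself \<Rightarrow> nat \<Rightarrow> (nat \<Rightarrow> nat \<Rightarrow> real) \<Rightarrow> real" where
  "sigma_max S Nt c = sqrt (Max {lam. gram_eigenvalue S Nt c lam})"

definition sigma_min :: "'s::finite itself \<Rightarrow> nat \<Rightarrow> (nat \<Rightarrow> nat \<Rightarrow> real) \<Rightarrow> real" where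
  "sigma_min S Nt c = sqrt (Min {lam. gram_eigenvalue S Nt c lam})"

text \<open>Scalar coefficients of the blocks of A_LM (resp. B_LM when applied to beta):
  block (n,m) is coef n (n-m) I when 0 <= n-m <= k n and m >= 1, zero otherwise.\<close>

definition LM_mat :: "(nat \<Rightarrow> nat) \<Rightarrow> (nat \<Rightarrow> nat \<Rightarrow> real) \<Rightarrow> nat \<Rightarrow> nat \<Rightarrow> real" where
  "LM_mat k coef n m = (if 1 \<le> m \<and> m \<le> n \<and> n - m \<le> k n then coef n (n - m) else 0)"

definition ext0 :: "real^'s \<Rightarrow> (nat \<Rightarrow> real^'s) \<Rightarrow> nat \<Rightarrow> real^'s" where
  "ext0 x0 w m = (if m = 0 then x0 else w m)"

definition lm_res ::
  "(real^'s \<Rightarrow> real \<Rightarrow> real^'s) \<Rightarrow> real^'s \<Rightarrow> real \<Rightarrow> nat \<Rightarrow> (nat \<Rightarrow> nat)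
   \<Rightarrow> (nat \<Rightarrow> nat \<Rightarrow> real) \<Rightarrow> (nat \<Rightarrow> nat \<Rightarrow> real) \<Rightarrow> (nat \<Rightarrow> real^'s) \<Rightarrow> nat \<Rightarrow> real^'s" where
  "lm_res f x0 T Nt k alpha beta w n =
     (\<Sum>j=0..k n. alpha n j *\<^sub>R ext0 x0 w (n - j))
     - (T / real Nt) *\<^sub>R (\<Sum>j=0..k n. beta n j *\<^sub>R f (ext0 x0 w (n - j)) (real (n - j) * (T / real Nt)))"

definition st_res ::
  "(real^'s \<Rightarrow> real \<Rightarrow> real^'s) \<Rightarrow> real^'s \<Rightarrow> real \<Rightarrow> nat \<Rightarrow> (nat \<Rightarrow> nat)
   \<Rightarrow> (nat \<Rightarrow> nat \<Rightarrow> real) \<Rightarrow> (nat \<Rightarrow> nat \<Rightarrow> real) \<Rightarrow> (nat \<Rightarrow> real^'s) \<Rightarrow> nat \<Rightarrow> real^'s" where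
  "st_res f x0 T Nt k alpha beta w = (\<lambda>n. if n \<in> {1..Nt} then lm_res f x0 T Nt k alpha beta w n else 0)"

definition trial_space :: "real^'s \<Rightarrow> (nat \<Rightarrow> nat \<Rightarrow> real^'s) \<Rightarrow> nat \<Rightarrow> (nat \<Rightarrow> real^'s) set" where
  "trial_space x0 Pi_b nst = {w. \<exists>c :: nat \<Rightarrow> real. w = (\<lambda>n. x0 + (\<Sum>i=1..nst. c i *\<^sub>R Pi_b i n))}"

end

theory Submission
  imports Defs
begin


definition ip :: "nat \<Rightarrow> (nat \<Rightarrow> real^'s) \<Rightarrow> (nat \<Rightarrow> real^'s) \<Rightarrow> real" where
  "ip N u v = (\<Sum>n=1..N. u n \<bullet> v n)"

lemma ip_commute: "ip N u v = ip N v u"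
  unfolding ip_def by (simp add: inner_commute)

lemma ip_self: "ip N v v = (\<Sum>n=1..N. (norm (v n))\<^sup>2)"
  unfolding ip_def by (simp add: power2_norm_eq_inner)

lemma ip_nonneg: "0 \<le> ip N v v"
  unfolding ip_self by (simp add: sum_nonneg)

lemma st_norm_sq: "(st_norm N v)\<^sup>2 = ip N v v"
  unfolding st_norm_def ip_self by (simp add: sum_nonneg)

lemma st_norm_ip: "st_norm N v = sqrt (ip N v v)"
  unfolding st_norm_def ip_self by simp

lemma st_norm_L2: "st_norm N v = L2_set (\<lambda>n. norm (v n)) {1..N}"
  unfolding st_norm_def L2_set_def by simp

lemma st_norm_nonneg: "0 \<le> st_norm N v"
  unfolding st_norm_def by (simp add: sum_nonneg)

lemma st_norm_add: "st_norm N (\<lambda>n. u n + v n) \<le> st_norm N u + st_norm N v"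
proof -
  have "st_norm N (\<lambda>n. u n + v n) \<le> L2_set (\<lambda>n. norm (u n) + norm (v n)) {1..N}"
    unfolding st_norm_L2 by (rule L2_set_mono) (auto simp: norm_triangle_ineq)
  also have "\<dots> \<le> st_norm N u + st_norm N v"
    unfolding st_norm_L2 by (rule L2_set_triangle_ineq)
  finally show ?thesis .
qed

lemma st_norm_diff: "st_norm N (\<lambda>n. u n - v n) \<le> st_norm N u + st_norm N v"
proof -
  have "st_norm N (\<lambda>n. u n - v n) = st_norm N (\<lambda>n. u n + (- v n))" by simp
  also have "\<dots> \<le> st_norm N u + st_norm N (\<lambda>n. - v n)" by (rule st_norm_add)
  also have "st_norm N (\<lambda>n. - v n) = st_norm N v" unfolding st_norm_def by simp
  finally show ?thesis .
qed

lemma st_norm_diff2: "st_norm N u - st_norm N v \<le> st_norm N (\<lambda>n. u n - v n)"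
proof -
  have "st_norm N u = st_norm N (\<lambda>n. (u n - v n) + v n)" by simp
  also have "\<dots> \<le> st_norm N (\<lambda>n. u n - v n) + st_norm N v" by (rule st_norm_add)
  finally show ?thesis by simp
qed

lemma st_norm_scale: "st_norm N (\<lambda>n. a *\<^sub>R v n) = \<bar>a\<bar> * st_norm N v"
  unfolding st_norm_def by (simp add: power_mult_distrib sum_distrib_left[symmetric] real_sqrt_mult)

lemma st_norm_commute: "st_norm N (\<lambda>n. u n - v n) = st_norm N (\<lambda>n. v n - u n)"
  unfolding st_norm_def by (simp add: norm_minus_commute)

lemma st_norm_cong: "(\<And>n. n \<in> {1..N} \<Longrightarrow> u n = v n) \<Longrightarrow> st_norm N u = st_norm N v"
  unfolding st_norm_def by (intro arg_cong[where f=sqrt] sum.cong) auto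

lemma LM_reindex:
  fixes h :: "nat \<Rightarrow> real^'s"
  assumes n: "n \<in> {1..N}" and kn: "k n \<le> n" and h0: "h 0 = 0"
  shows "(\<Sum>j=0..k n. c n j *\<^sub>R h (n - j)) = (\<Sum>m=1..N. LM_mat k c n m *\<^sub>R h m)"
proof -
  have "(\<Sum>j=0..k n. c n j *\<^sub>R h (n - j)) = (\<Sum>j\<in>{j. j \<le> k n \<and> j < n}. c n j *\<^sub>R h (n - j))"
  proof (intro sum.mono_neutral_right)
    show "\<forall>i\<in>{0..k n} - {j. j \<le> k n \<and> j < n}. c n i *\<^sub>R h (n - i) = 0"
    proof
      fix i assume "i \<in> {0..k n} - {j. j \<le> k n \<and> j < n}"
      then have "i = n" using kn by auto
      then show "c n i *\<^sub>R h (n - i) = 0" using h0 by simp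
    qed
  qed auto
  also have "\<dots> = (\<Sum>m\<in>{m. 1 \<le> m \<and> m \<le> n \<and> n - m \<le> k n}. c n (n - m) *\<^sub>R h m)"
    by (rule sum.reindex_bij_witness[of _ "\<lambda>m. n - m" "\<lambda>j. n - j"]) auto
  also have "\<dots> = (\<Sum>m=1..N. LM_mat k c n m *\<^sub>R h m)"
    using n by (intro sum.mono_neutral_cong_left) (auto simp: LM_mat_def)
  finally show ?thesis .
qed



lemma blk_apply_in: "n \<in> {1..N} \<Longrightarrow> blk_apply N c w n = (\<Sum>m=1..N. c n m *\<^sub>R w m)"
  unfolding blk_apply_def by simp

lemma adjoint: "ip N (blk_apply N c u) w = ip N u (blk_tapply N c w)"
proof -
  have "ip N (blk_apply N c u) w = (\<Sum>n=1..N. \<Sum>m=1..N. c n m * (u m \<bullet> w n))"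
    unfolding ip_def blk_apply_def by (intro sum.cong) (auto simp: inner_sum_left)
  also have "\<dots> = (\<Sum>m=1..N. \<Sum>n=1..N. c n m * (u m \<bullet> w n))" by (rule sum.swap)
  also have "\<dots> = ip N u (blk_tapply N c w)"
    unfolding ip_def blk_tapply_def by (intro sum.cong) (auto simp: inner_sum_right)
  finally show ?thesis .
qed

lemma gram_ip: "ip N (blk_tapply N c (blk_apply N c u)) w = ip N (blk_apply N c u) (blk_apply N c w)"
proof -
  have "ip N (blk_tapply N c (blk_apply N c u)) w = ip N w (blk_tapply N c (blk_apply N c u))"
    by (rule ip_commute)
  also have "\<dots> = ip N (blk_apply N c w) (blk_apply N c u)" by (rule adjoint[symmetric])
  also have "\<dots> = ip N (blk_apply N c u) (blk_apply N c w)" by (rule ip_commute)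
  finally show ?thesis .
qed

lemma ip_lin: "ip N (\<lambda>n. a n + t *\<^sub>R b n) w = ip N a w + t * ip N b w"
  unfolding ip_def by (simp add: inner_add_left sum.distrib sum_distrib_left)

lemma ip_lin2: "ip N w (\<lambda>n. a n + t *\<^sub>R b n) = ip N w a + t * ip N w b"
  unfolding ip_def by (simp add: inner_add_right sum.distrib sum_distrib_left)

lemma ip_scale: "ip N (\<lambda>n. t *\<^sub>R b n) w = t * ip N b w"
  unfolding ip_def by (simp add: sum_distrib_left)

lemma ip_scale2: "ip N w (\<lambda>n. t *\<^sub>R b n) = t * ip N w b"
  unfolding ip_def by (simp add: sum_distrib_left)

lemma ip_diff: "ip N (\<lambda>n. a n - b n) w = ip N a w - ip N b w"
  unfolding ip_def by (simp add: inner_diff_left sum_subtractf)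

lemma blk_lin: "blk_apply N c (\<lambda>n. a n + t *\<^sub>R b n) = (\<lambda>n. blk_apply N c a n + t *\<^sub>R blk_apply N c b n)"
  unfolding blk_apply_def
  by (rule ext) (simp add: sum.distrib scaleR_add_right scaleR_sum_right mult.commute)

lemma blk_scale: "blk_apply N c (\<lambda>n. t *\<^sub>R b n) = (\<lambda>n. t *\<^sub>R blk_apply N c b n)"
  unfolding blk_apply_def by (rule ext) (simp add: scaleR_sum_right mult.commute)

lemma ip_zero_iff: "st_vec N v \<Longrightarrow> ip N v v = 0 \<Longrightarrow> v = (\<lambda>_. 0)"
proof -
  assume st: "st_vec N v" and z: "ip N v v = 0"
  have "\<forall>n\<in>{1..N}. (norm (v n))\<^sup>2 = 0"
    using z unfolding ip_self by (subst sum_nonneg_eq_0_iff[symmetric]) auto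
  then show ?thesis using st unfolding st_vec_def by fastforce
qed

lemma blk_bound:
  "\<exists>K. \<forall>u::nat\<Rightarrow>real^'s. ip N (blk_apply N c u) (blk_apply N c u) \<le> K * ip N u u"
proof -
  define K where "K = (\<Sum>n=1..N. (\<Sum>m=1..N. \<bar>c n m\<bar>)\<^sup>2)"
  have "ip N (blk_apply N c u) (blk_apply N c u) \<le> K * ip N u u" for u :: "nat\<Rightarrow>real^'s"
  proof -
    have b: "norm (u m) \<le> st_norm N u" if "m \<in> {1..N}" for m
      unfolding st_norm_L2 by (rule member_le_L2_set) (use that in auto)
    have nb: "norm (blk_apply N c u n) \<le> (\<Sum>m=1..N. \<bar>c n m\<bar>) * st_norm N u" if n: "n \<in> {1..N}" for n
    proof -
      have "norm (blk_apply N c u n) \<le> (\<Sum>m=1..N. norm (c n m *\<^sub>R u m))"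
        unfolding blk_apply_in[OF n] by (rule norm_sum)
      also have "\<dots> \<le> (\<Sum>m=1..N. \<bar>c n m\<bar> * st_norm N u)"
        by (intro sum_mono) (simp add: mult_left_mono b)
      finally show ?thesis by (simp add: sum_distrib_right)
    qed
    have "(norm (blk_apply N c u n))\<^sup>2 \<le> (\<Sum>m=1..N. \<bar>c n m\<bar>)\<^sup>2 * ip N u u" if n: "n \<in> {1..N}" for n
    proof -
      have "(norm (blk_apply N c u n))\<^sup>2 \<le> ((\<Sum>m=1..N. \<bar>c n m\<bar>) * st_norm N u)\<^sup>2"
        by (rule power_mono[OF nb[OF n] norm_ge_zero])
      also have "\<dots> = (\<Sum>m=1..N. \<bar>c n m\<bar>)\<^sup>2 * ip N u u"
        by (simp add: power_mult_distrib st_norm_sq)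
      finally show ?thesis .
    qed
    then have "ip N (blk_apply N c u) (blk_apply N c u) \<le> (\<Sum>n=1..N. (\<Sum>m=1..N. \<bar>c n m\<bar>)\<^sup>2 * ip N u u)"
      unfolding ip_self[of N "blk_apply N c u"] by (intro sum_mono) auto
    then show ?thesis unfolding K_def by (simp add: sum_distrib_right)
  qed
  then show ?thesis by blast
qed



lemma exists_max:
  fixes c :: "nat \<Rightarrow> nat \<Rightarrow> real" and s :: real
  assumes N: "1 \<le> N"
  shows "\<exists>v::nat\<Rightarrow>real^'s. st_vec N v \<and> ip N v v = 1 \<and>
     (\<forall>u::nat\<Rightarrow>real^'s. st_vec N u \<and> ip N u u = 1 \<longrightarrow>
        s * ip N (blk_apply N c u) (blk_apply N c u) \<le> s * ip N (blk_apply N c v) (blk_apply N c v))"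
proof -
  define Q where "Q u = s * ip N (blk_apply N c u) (blk_apply N c u)" for u :: "nat\<Rightarrow>real^'s"
  define U where "U = {u::nat\<Rightarrow>real^'s. st_vec N u \<and> ip N u u = 1}"
  obtain K where K: "\<And>u::nat\<Rightarrow>real^'s. ip N (blk_apply N c u) (blk_apply N c u) \<le> K * ip N u u"
    using blk_bound by blast
  have Qb: "Q u \<le> \<bar>s\<bar> * K" if "u \<in> U" for u
  proof -
    have "ip N (blk_apply N c u) (blk_apply N c u) \<le> K" using K[of u] that by (simp add: U_def)
    moreover have "0 \<le> ip N (blk_apply N c u) (blk_apply N c u)" by (rule ip_nonneg)
    ultimately have "\<bar>Q u\<bar> \<le> \<bar>s\<bar> * K" unfolding Q_def by (simp add: abs_mult mult_left_mono)
    then show ?thesis by simp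
  qed
  define e where "e = (\<lambda>n::nat. if n = 1 then (axis undefined 1 :: real^'s) else 0)"
  have "ip N e e = (\<Sum>n=1..N. if n = 1 then 1 else 0)"
    unfolding ip_def e_def by (intro sum.cong) (auto simp: inner_axis_axis)
  also have "\<dots> = 1" using N by (simp add: sum.delta)
  finally have eU: "e \<in> U" unfolding U_def st_vec_def e_def using N by auto
  have bdd: "bdd_above (Q ` U)" using Qb by (intro bdd_aboveI2) auto
  define \<mu> where "\<mu> = Sup (Q ` U)"
  have up: "Q u \<le> \<mu>" if "u \<in> U" for u
    unfolding \<mu>_def using bdd that by (intro cSup_upper) auto
  have "\<exists>u\<in>U. \<mu> - inverse (real (Suc j)) < Q u" for j
  proof -
    have "\<mu> - inverse (real (Suc j)) < \<mu>" by simp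
    then show ?thesis unfolding \<mu>_def using less_cSup_iff[of "Q ` U"] eU bdd by blast
  qed
  then obtain v where v: "\<And>j. v j \<in> U \<and> \<mu> - inverse (real (Suc j)) < Q (v j)" by metis
  have bnd: "norm (v j n) \<le> 1" if "n \<in> {1..N}" for j n
  proof -
    have "norm (v j n) \<le> st_norm N (v j)"
      unfolding st_norm_L2 by (rule member_le_L2_set) (use that in auto)
    also have "st_norm N (v j) = 1" using v[of j] unfolding U_def st_norm_ip by simp
    finally show ?thesis .
  qed
  have "\<forall>\<delta>\<subseteq>{1..N}. \<exists>l::nat\<Rightarrow>real^'s. \<exists>r::nat\<Rightarrow>nat.
    strict_mono r \<and> (\<forall>\<epsilon>>0. eventually (\<lambda>j. \<forall>i\<in>\<delta>. dist (v (r j) i) (l i) < \<epsilon>) sequentially)"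
  proof (rule compact_lemma_general[where f=v and proj="\<lambda>x k. x k" and unproj="\<lambda>e. e" and basis="{1..N}"])
    fix k assume "k \<in> {1..N}"
    then show "bounded ((\<lambda>x. x k) ` range v)"
      unfolding bounded_iff using bnd by blast
  qed auto
  then obtain l r where r: "strict_mono r"
    and conv: "\<forall>\<epsilon>>0. eventually (\<lambda>j. \<forall>i\<in>{1..N}. dist (v (r j) i) (l i) < \<epsilon>) sequentially"
    by blast
  define l' where "l' n = (if n \<in> {1..N} then l n else 0)" for n
  have lim: "(\<lambda>j. v (r j) n) \<longlonglongrightarrow> l' n" if "n \<in> {1..N}" for n
    unfolding tendsto_iff l'_def using that
    by (auto intro: eventually_mono[OF conv[rule_format]])
  have "(\<lambda>j. ip N (v (r j)) (v (r j))) \<longlonglongrightarrow> ip N l' l'"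
    unfolding ip_def by (intro tendsto_sum tendsto_inner lim) auto
  moreover have "(\<lambda>j. ip N (v (r j)) (v (r j))) = (\<lambda>j. 1)"
    using v by (auto simp: U_def)
  ultimately have l1: "ip N l' l' = 1"
    using LIMSEQ_unique tendsto_const by metis
  have limM: "(\<lambda>j. blk_apply N c (v (r j)) n) \<longlonglongrightarrow> blk_apply N c l' n" if "n \<in> {1..N}" for n
    unfolding blk_apply_in[OF that] by (intro tendsto_sum tendsto_scaleR tendsto_const lim) auto
  have limQ: "(\<lambda>j. Q (v (r j))) \<longlonglongrightarrow> Q l'"
    unfolding Q_def ip_def by (intro tendsto_mult tendsto_const tendsto_sum tendsto_inner limM) auto
  have limQ2: "(\<lambda>j. Q (v (r j))) \<longlonglongrightarrow> \<mu>"
  proof (rule tendsto_sandwich[of "\<lambda>j. \<mu> - inverse (real (Suc j))" _ _ "\<lambda>j. \<mu>"])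
    show "\<forall>\<^sub>F j in sequentially. \<mu> - inverse (real (Suc j)) \<le> Q (v (r j))"
    proof (rule always_eventually, rule allI)
      fix j
      have "j \<le> r j" using seq_suble[OF r] by simp
      then have "inverse (real (Suc (r j))) \<le> inverse (real (Suc j))"
        by (simp add: le_imp_inverse_le)
      then show "\<mu> - inverse (real (Suc j)) \<le> Q (v (r j))" using v[of "r j"] by linarith
    qed
    show "\<forall>\<^sub>F j in sequentially. Q (v (r j)) \<le> \<mu>"
      using up v by (intro always_eventually) auto
    show "(\<lambda>j. \<mu> - inverse (real (Suc j))) \<longlonglongrightarrow> \<mu>"
      using tendsto_diff[OF tendsto_const LIMSEQ_inverse_real_of_nat, of \<mu>] by simp
  qed simp
  have Ql: "Q l' = \<mu>" using LIMSEQ_unique[OF limQ limQ2] .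
  have "st_vec N l'" unfolding st_vec_def l'_def by auto
  then have "l' \<in> U" using l1 unfolding U_def by blast
  have upl: "Q u \<le> Q l'" if "st_vec N u \<and> ip N u u = 1" for u
    using up[of u] Ql that unfolding U_def by simp
  show ?thesis
  proof (intro exI[of _ l'] conjI allI impI)
    show "st_vec N l'" by fact
    show "ip N l' l' = 1" by (rule l1)
    fix u :: "nat \<Rightarrow> real^'s" assume "st_vec N u \<and> ip N u u = 1"
    from upl[OF this] show "s * ip N (blk_apply N c u) (blk_apply N c u) \<le> s * ip N (blk_apply N c l') (blk_apply N c l')"
      unfolding Q_def .
  qed
qed



lemma blk_zero: "blk_apply N c (\<lambda>_. 0) = (\<lambda>_. 0)"
  unfolding blk_apply_def by auto

lemma st_vec_comb: "st_vec N a \<Longrightarrow> st_vec N b \<Longrightarrow> st_vec N (\<lambda>n. a n + t *\<^sub>R b n)"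
  unfolding st_vec_def by auto

lemma tapply_eq: "blk_tapply N c = blk_apply N (\<lambda>n m. c m n)"
  unfolding blk_tapply_def blk_apply_def by simp

lemma st_vec_tapply: "st_vec N (blk_tapply N c w)"
  unfolding st_vec_def blk_tapply_def by auto

lemma scaling:
  fixes u :: "nat \<Rightarrow> real^'s"
  assumes st: "st_vec N u"
    and mx: "\<forall>u::nat\<Rightarrow>real^'s. st_vec N u \<and> ip N u u = 1 \<longrightarrow> s * ip N (blk_apply N c u) (blk_apply N c u) \<le> s * q"
  shows "s * ip N (blk_apply N c u) (blk_apply N c u) \<le> s * q * ip N u u"
proof (cases "ip N u u = 0")
  case True
  then have "u = (\<lambda>_. 0)" using ip_zero_iff st by blast
  then show ?thesis using True by (simp add: blk_zero ip_def)
next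
  case False
  define p where "p = ip N u u"
  have p: "0 < p" using False ip_nonneg[of N u] unfolding p_def by linarith
  define a where "a = inverse (sqrt p)"
  have a2: "a * a = inverse p"
  proof -
    have "sqrt p * sqrt p = p" using p by simp
    moreover have "a * a = inverse (sqrt p * sqrt p)" unfolding a_def by (rule inverse_mult_distrib[symmetric])
    ultimately show ?thesis by simp
  qed
  define u' where "u' = (\<lambda>n. a *\<^sub>R u n)"
  have "ip N u' u' = a * a * p" unfolding u'_def p_def
    by (simp add: ip_scale ip_scale2) 
  then have "ip N u' u' = 1" using a2 p by simp
  moreover have "st_vec N u'" using st unfolding st_vec_def u'_def by auto
  ultimately have "s * ip N (blk_apply N c u') (blk_apply N c u') \<le> s * q" using mx by blast
  moreover have "ip N (blk_apply N c u') (blk_apply N c u') = a * a * ip N (blk_apply N c u) (blk_apply N c u)"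
    unfolding u'_def blk_scale by (simp add: ip_scale ip_scale2)
  ultimately have "inverse p * (s * ip N (blk_apply N c u) (blk_apply N c u)) \<le> s * q"
    using a2 by (simp add: algebra_simps)
  then have "s * ip N (blk_apply N c u) (blk_apply N c u) \<le> s * q * p"
    using p by (simp add: field_simps)
  then show ?thesis unfolding p_def .
qed

lemma max_eigen:
  fixes v :: "nat \<Rightarrow> real^'s"
  assumes st: "st_vec N v" and v1: "ip N v v = 1" and s: "s \<noteq> 0"
    and mx: "\<forall>u::nat\<Rightarrow>real^'s. st_vec N u \<and> ip N u u = 1 \<longrightarrow>
        s * ip N (blk_apply N c u) (blk_apply N c u) \<le> s * ip N (blk_apply N c v) (blk_apply N c v)"
  shows "gram_eigenvalue TYPE('s) N c (ip N (blk_apply N c v) (blk_apply N c v))"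
    and "\<forall>u::nat\<Rightarrow>real^'s. st_vec N u \<longrightarrow> s * ip N (blk_apply N c u) (blk_apply N c u)
            \<le> s * ip N (blk_apply N c v) (blk_apply N c v) * ip N u u"
proof -
  define q where "q = ip N (blk_apply N c v) (blk_apply N c v)"
  have sc: "s * ip N (blk_apply N c u) (blk_apply N c u) \<le> s * q * ip N u u" if "st_vec N u" for u :: "nat \<Rightarrow> real^'s"
    using scaling[OF that] mx unfolding q_def by blast
  then show "\<forall>u::nat\<Rightarrow>real^'s. st_vec N u \<longrightarrow> s * ip N (blk_apply N c u) (blk_apply N c u)
            \<le> s * ip N (blk_apply N c v) (blk_apply N c v) * ip N u u" unfolding q_def by blast
  define Bf where "Bf u w = s * q * ip N u w - s * ip N (blk_apply N c u) (blk_apply N c w)" for u w :: "nat \<Rightarrow> real^'s"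
  have Bpos: "0 \<le> Bf u u" if "st_vec N u" for u using sc[OF that] unfolding Bf_def by simp
  have Bvv: "Bf v v = 0" unfolding Bf_def q_def using v1 by simp
  have Bsym: "Bf u w = Bf w u" for u w unfolding Bf_def by (simp add: ip_commute)
  have Bexp: "Bf (\<lambda>n. v n + t *\<^sub>R w n) (\<lambda>n. v n + t *\<^sub>R w n) = Bf v v + 2 * t * Bf v w + t * t * Bf w w" for w t
  proof -
    have e1: "ip N (\<lambda>n. v n + t *\<^sub>R w n) (\<lambda>n. v n + t *\<^sub>R w n) = ip N v v + 2 * t * ip N v w + t * t * ip N w w"
      by (simp add: ip_lin ip_lin2 ip_commute[of N w v] algebra_simps)
    have e2: "ip N (blk_apply N c (\<lambda>n. v n + t *\<^sub>R w n)) (blk_apply N c (\<lambda>n. v n + t *\<^sub>R w n))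
      = ip N (blk_apply N c v) (blk_apply N c v) + 2 * t * ip N (blk_apply N c v) (blk_apply N c w)
        + t * t * ip N (blk_apply N c w) (blk_apply N c w)"
      unfolding blk_lin by (simp add: ip_lin ip_lin2 ip_commute[of N "blk_apply N c w" "blk_apply N c v"] algebra_simps)
    show ?thesis unfolding Bf_def e1 e2 by (simp add: algebra_simps)
  qed
  have Bvw: "Bf v w = 0" if w: "st_vec N w" for w
  proof -
    define b where "b = Bf v w"
    define d where "d = Bf w w"
    have d: "0 \<le> d" unfolding d_def using Bpos[OF w] .
    define t where "t = - b / (d + 1)"
    have "0 \<le> Bf (\<lambda>n. v n + t *\<^sub>R w n) (\<lambda>n. v n + t *\<^sub>R w n)"
      by (rule Bpos, rule st_vec_comb[OF st w])
    then have h0: "0 \<le> 2 * t * b + t * t * d" unfolding Bexp Bvv b_def d_def by simp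
    have td: "t * (d + 1) = - b" unfolding t_def using d by simp
    have e: "(d+1)*(d+1)*(2*t*b+t*t*d) = 2*b*(d+1)*(t*(d+1)) + d*(t*(d+1))*(t*(d+1))"
      by (simp add: algebra_simps)
    have e2: "2*b*(d+1)*(t*(d+1)) + d*(t*(d+1))*(t*(d+1)) = - (b * b * (d + 2))"
      unfolding td by (simp add: algebra_simps)
    have "0 \<le> (d+1)*(d+1)*(2*t*b+t*t*d)" using h0 d by simp
    then have "b * b * (d + 2) \<le> 0" unfolding e e2 by simp
    moreover have "0 \<le> b * b" by simp
    ultimately have "b * b \<le> 0" using d
      using mult_le_0_iff[of "b*b" "d+2"] by auto
    then have "b * b = 0" using zero_le_square[of b] by linarith
    then have "b = 0" by simp
    then show ?thesis by (simp add: b_def)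
  qed
  define G where "G = blk_tapply N c (blk_apply N c v)"
  define z where "z = (\<lambda>n. q *\<^sub>R v n - G n)"
  have stz: "st_vec N z" unfolding z_def G_def using st st_vec_tapply[of N c]
    unfolding st_vec_def by auto
  have "ip N z z = q * ip N v z - ip N G z" unfolding z_def by (simp add: ip_diff ip_scale)
  also have "ip N G z = ip N (blk_apply N c v) (blk_apply N c z)" unfolding G_def by (rule gram_ip)
  also have "q * ip N v z - ip N (blk_apply N c v) (blk_apply N c z) = Bf v z / s"
    unfolding Bf_def using s by (simp add: field_simps)
  also have "\<dots> = 0" using Bvw[OF stz] by simp
  finally have "z = (\<lambda>_. 0)" using ip_zero_iff stz by blast
  then have "G = (\<lambda>n. q *\<^sub>R v n)"
  proof -
    assume z0: "z = (\<lambda>_. 0)"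
    show ?thesis
    proof (rule ext)
      fix n
      have "q *\<^sub>R v n - G n = 0" using fun_cong[OF z0, of n] unfolding z_def by simp
      then show "G n = q *\<^sub>R v n" by simp
    qed
  qed
  then have Gv: "blk_tapply N c (blk_apply N c v) = (\<lambda>n. q *\<^sub>R v n)" unfolding G_def .
  have nz: "v \<noteq> (\<lambda>_. 0)" using v1 by (auto simp: ip_def)
  show "gram_eigenvalue TYPE('s) N c (ip N (blk_apply N c v) (blk_apply N c v))"
    unfolding gram_eigenvalue_def q_def[symmetric] by (rule exI[of _ v]) (simp add: st nz Gv)
qed

lemma eig_rayleigh:
  assumes "blk_tapply N c (blk_apply N c w) = (\<lambda>n. lam *\<^sub>R w n)"
  shows "ip N (blk_apply N c w) (blk_apply N c w) = lam * ip N w w"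
  using gram_ip[of N c w w] assms by (simp add: ip_scale)



lemma eig_orth:
  assumes e1: "blk_tapply N c (blk_apply N c w1) = (\<lambda>n. l1 *\<^sub>R w1 n)"
    and e2: "blk_tapply N c (blk_apply N c w2) = (\<lambda>n. l2 *\<^sub>R w2 n)"
    and ne: "l1 \<noteq> l2"
  shows "ip N w1 w2 = 0"
proof -
  have "l1 * ip N w1 w2 = ip N (blk_apply N c w1) (blk_apply N c w2)"
    using gram_ip[of N c w1 w2] e1 by (simp add: ip_scale)
  moreover have "l2 * ip N w2 w1 = ip N (blk_apply N c w2) (blk_apply N c w1)"
    using gram_ip[of N c w2 w1] e2 by (simp add: ip_scale)
  ultimately have "(l1 - l2) * ip N w1 w2 = 0" by (simp add: ip_commute algebra_simps)
  then show ?thesis using ne by simp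
qed

lemma ip_sumlin:
  "ip N (\<lambda>n. x n - (\<Sum>l\<in>F. a l *\<^sub>R e l n)) y = ip N x y - (\<Sum>l\<in>F. a l * ip N (e l) y)"
proof -
  have "ip N (\<lambda>n. x n - (\<Sum>l\<in>F. a l *\<^sub>R e l n)) y
      = ip N x y - (\<Sum>n=1..N. \<Sum>l\<in>F. a l * (e l n \<bullet> y n))"
    unfolding ip_def by (simp add: inner_diff_left inner_sum_left sum_subtractf)
  also have "(\<Sum>n=1..N. \<Sum>l\<in>F. a l * (e l n \<bullet> y n)) = (\<Sum>l\<in>F. \<Sum>n=1..N. a l * (e l n \<bullet> y n))"
    by (rule sum.swap)
  also have "\<dots> = (\<Sum>l\<in>F. a l * ip N (e l) y)"
    unfolding ip_def by (simp add: sum_distrib_left)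
  finally show ?thesis .
qed

lemma bessel:
  assumes F: "finite F"
    and on: "\<forall>l\<in>F. \<forall>m\<in>F. ip N (e l) (e m) = (if l = m then 1 else 0)"
  shows "(\<Sum>l\<in>F. (ip N (e l) b)\<^sup>2) \<le> ip N b b"
proof -
  define a where "a l = ip N (e l) b" for l
  define d where "d = (\<lambda>n. b n - (\<Sum>l\<in>F. a l *\<^sub>R e l n))"
  have dz: "ip N d (e m) = 0" if m: "m \<in> F" for m
  proof -
    have "ip N d (e m) = ip N b (e m) - (\<Sum>l\<in>F. a l * ip N (e l) (e m))"
      unfolding d_def by (rule ip_sumlin)
    also have "(\<Sum>l\<in>F. a l * ip N (e l) (e m)) = (\<Sum>l\<in>F. if l = m then a l else 0)"
      using on m by (intro sum.cong) auto
    also have "\<dots> = a m" using F m by (simp add: sum.delta')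
    finally show ?thesis unfolding a_def by (simp add: ip_commute)
  qed
  have "ip N d d = ip N b d - (\<Sum>l\<in>F. a l * ip N (e l) d)"
    unfolding d_def by (rule ip_sumlin)
  also have "(\<Sum>l\<in>F. a l * ip N (e l) d) = 0" using dz by (simp add: ip_commute)
  also have "ip N b d = ip N d b" by (rule ip_commute)
  also have "ip N d b = ip N b b - (\<Sum>l\<in>F. a l * a l)" unfolding d_def ip_sumlin a_def ..
  finally have "ip N d d = ip N b b - (\<Sum>l\<in>F. (ip N (e l) b)\<^sup>2)"
    unfolding a_def by (simp add: power2_eq_square)
  then show ?thesis using ip_nonneg[of N d] by simp
qed

lemma normalized_eig:
  assumes "gram_eigenvalue TYPE('s) N c lam"
  shows "\<exists>w::nat\<Rightarrow>real^'s. st_vec N w \<and> ip N w w = 1 \<and> blk_tapply N c (blk_apply N c w) = (\<lambda>n. lam *\<^sub>R w n)"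
proof -
  obtain w :: "nat\<Rightarrow>real^'s" where st: "st_vec N w" and nz: "w \<noteq> (\<lambda>_. 0)"
    and ev: "blk_tapply N c (blk_apply N c w) = (\<lambda>n. lam *\<^sub>R w n)"
    using assms unfolding gram_eigenvalue_def by blast
  define p where "p = ip N w w"
  have p: "0 < p" using nz ip_zero_iff[OF st] ip_nonneg[of N w] unfolding p_def by fastforce
  define a where "a = inverse (sqrt p)"
  have a2: "a * a = inverse p"
  proof -
    have "sqrt p * sqrt p = p" using p by simp
    moreover have "a * a = inverse (sqrt p * sqrt p)" unfolding a_def by (rule inverse_mult_distrib[symmetric])
    ultimately show ?thesis by simp
  qed
  define w' where "w' = (\<lambda>n. a *\<^sub>R w n)"
  have "ip N w' w' = a * a * p" unfolding w'_def p_def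
    by (simp add: ip_scale ip_scale2)
  then have "ip N w' w' = 1" using a2 p by simp
  moreover have "st_vec N w'" using st unfolding st_vec_def w'_def by auto
  moreover have "blk_tapply N c (blk_apply N c w') = (\<lambda>n. lam *\<^sub>R w' n)"
    unfolding w'_def blk_scale tapply_eq using ev unfolding tapply_eq
    by (simp add: blk_scale mult.commute) 
  ultimately show ?thesis by blast
qed

lemma finite_eig: "finite {lam. gram_eigenvalue TYPE('s::finite) N c lam}"
proof (rule ccontr)
  define E where "E = {lam. gram_eigenvalue TYPE('s) N c lam}"
  define D where "D = N * CARD('s)"
  assume "infinite {lam. gram_eigenvalue TYPE('s) N c lam}"
  then obtain F where F: "finite F" "card F = Suc D" "F \<subseteq> E"
    using infinite_arbitrarily_large unfolding E_def by blast
  have "\<forall>l\<in>F. \<exists>w::nat\<Rightarrow>real^'s. st_vec N w \<and> ip N w w = 1 \<and> blk_tapply N c (blk_apply N c w) = (\<lambda>n. l *\<^sub>R w n)"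
    using F(3) normalized_eig unfolding E_def by blast
  from bchoice[OF this] obtain e :: "real \<Rightarrow> nat \<Rightarrow> real^'s" where
    e': "\<forall>l\<in>F. st_vec N (e l) \<and> ip N (e l) (e l) = 1 \<and> blk_tapply N c (blk_apply N c (e l)) = (\<lambda>n. l *\<^sub>R e l n)"
    by blast
  then have e: "\<And>l. l \<in> F \<Longrightarrow> st_vec N (e l) \<and> ip N (e l) (e l) = 1 \<and> blk_tapply N c (blk_apply N c (e l)) = (\<lambda>n. l *\<^sub>R e l n)"
    by blast
  have on: "\<forall>l\<in>F. \<forall>m\<in>F. ip N (e l) (e m) = (if l = m then 1 else 0)"
  proof (intro ballI)
    fix l m assume l: "l \<in> F" and m: "m \<in> F"
    show "ip N (e l) (e m) = (if l = m then 1 else 0)"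
    proof (cases "l = m")
      case True then show ?thesis using e[OF l] by simp
    next
      case False
      have "ip N (e l) (e m) = 0"
        using eig_orth[of N c "e l" l "e m" m] e[OF l] e[OF m] False by blast
      then show ?thesis using False by simp
    qed
  qed
  define b where "b n i = (\<lambda>m. if m = n then axis i 1 else (0::real^'s))" for n :: nat and i :: 's
  have ipb: "ip N x (b n i) = x n $ i" if "n \<in> {1..N}" for x n i
  proof -
    have "ip N x (b n i) = (\<Sum>m=1..N. if m = n then x m \<bullet> axis i 1 else 0)"
      unfolding ip_def b_def by (intro sum.cong) auto
    also have "\<dots> = x n \<bullet> axis i 1" using that by (simp add: sum.delta')
    finally show ?thesis by (simp add: inner_axis)
  qed
  have bb: "ip N (b n i) (b n i) = 1" if "n \<in> {1..N}" for n i
    using ipb[OF that, of "b n i" i] unfolding b_def by simp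
  have "real (card F) = (\<Sum>l\<in>F. ip N (e l) (e l))" using e by simp
  also have "\<dots> = (\<Sum>l\<in>F. \<Sum>n=1..N. \<Sum>i\<in>UNIV. (e l n $ i)\<^sup>2)"
    unfolding ip_def by (simp add: inner_vec_def power2_eq_square)
  also have "\<dots> = (\<Sum>n=1..N. \<Sum>i\<in>UNIV. \<Sum>l\<in>F. (ip N (e l) (b n i))\<^sup>2)"
  proof -
    have "(\<Sum>l\<in>F. \<Sum>n=1..N. \<Sum>i\<in>UNIV. (e l n $ i)\<^sup>2) = (\<Sum>n=1..N. \<Sum>l\<in>F. \<Sum>i\<in>UNIV. (e l n $ i)\<^sup>2)"
      by (rule sum.swap)
    also have "\<dots> = (\<Sum>n=1..N. \<Sum>i\<in>UNIV. \<Sum>l\<in>F. (e l n $ i)\<^sup>2)"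
      by (intro sum.cong refl sum.swap)
    also have "\<dots> = (\<Sum>n=1..N. \<Sum>i\<in>UNIV. \<Sum>l\<in>F. (ip N (e l) (b n i))\<^sup>2)"
      by (intro sum.cong refl) (simp add: ipb)
    finally show ?thesis .
  qed
  also have "\<dots> \<le> (\<Sum>n=1..N. \<Sum>i\<in>(UNIV::'s set). 1)"
  proof (intro sum_mono)
    fix n i assume n: "n \<in> {1..N}"
    show "(\<Sum>l\<in>F. (ip N (e l) (b n i))\<^sup>2) \<le> 1"
      using bessel[OF F(1) on, of "b n i"] bb[OF n, of i] by simp
  qed
  also have "\<dots> = real D" unfolding D_def by simp
  finally show False using F(2) by simp
qed



lemma eig_bound_aux:
  assumes "gram_eigenvalue TYPE('s) N c l"
  obtains w :: "nat \<Rightarrow> real^'s" where "st_vec N w" "0 < ip N w w"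
    "ip N (blk_apply N c w) (blk_apply N c w) = l * ip N w w"
proof -
  obtain w :: "nat\<Rightarrow>real^'s" where st: "st_vec N w" and nz: "w \<noteq> (\<lambda>_. 0)"
    and ev: "blk_tapply N c (blk_apply N c w) = (\<lambda>n. l *\<^sub>R w n)"
    using assms unfolding gram_eigenvalue_def by blast
  have p: "0 < ip N w w" using nz ip_zero_iff[OF st] ip_nonneg[of N w] by fastforce
  show ?thesis using that st p eig_rayleigh[OF ev] by blast
qed

lemma sigma_props:
  fixes c :: "nat \<Rightarrow> nat \<Rightarrow> real"
  assumes N: "1 \<le> N"
  defines "E \<equiv> {lam. gram_eigenvalue TYPE('s) N c lam}"
  shows "\<And>u::nat\<Rightarrow>real^'s. st_vec N u \<Longrightarrow> ip N (blk_apply N c u) (blk_apply N c u) \<le> Max E * ip N u u"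
    and "\<And>u::nat\<Rightarrow>real^'s. st_vec N u \<Longrightarrow> Min E * ip N u u \<le> ip N (blk_apply N c u) (blk_apply N c u)"
    and "0 \<le> Min E" and "Min E \<le> Max E"
proof -
  have fin: "finite E" unfolding E_def by (rule finite_eig)
  obtain v1 :: "nat\<Rightarrow>real^'s" where st1: "st_vec N v1" and n1: "ip N v1 v1 = 1"
    and mx1: "\<forall>u::nat\<Rightarrow>real^'s. st_vec N u \<and> ip N u u = 1 \<longrightarrow>
        1 * ip N (blk_apply N c u) (blk_apply N c u) \<le> 1 * ip N (blk_apply N c v1) (blk_apply N c v1)"
    using exists_max[OF N, where s=1 and c=c] by blast
  define q1 where "q1 = ip N (blk_apply N c v1) (blk_apply N c v1)"
  have q1E: "q1 \<in> E" unfolding E_def q1_def using max_eigen(1)[OF st1 n1 _ mx1] by simp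
  have b1: "ip N (blk_apply N c u) (blk_apply N c u) \<le> q1 * ip N u u" if "st_vec N u" for u :: "nat\<Rightarrow>real^'s"
    using max_eigen(2)[OF st1 n1 _ mx1] that unfolding q1_def by simp
  obtain v2 :: "nat\<Rightarrow>real^'s" where st2: "st_vec N v2" and n2: "ip N v2 v2 = 1"
    and mx2: "\<forall>u::nat\<Rightarrow>real^'s. st_vec N u \<and> ip N u u = 1 \<longrightarrow>
        (-1) * ip N (blk_apply N c u) (blk_apply N c u) \<le> (-1) * ip N (blk_apply N c v2) (blk_apply N c v2)"
    using exists_max[OF N, where s="-1" and c=c] by blast
  define q2 where "q2 = ip N (blk_apply N c v2) (blk_apply N c v2)"
  have q2E: "q2 \<in> E" unfolding E_def q2_def using max_eigen(1)[OF st2 n2 _ mx2] by simp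
  have b2: "q2 * ip N u u \<le> ip N (blk_apply N c u) (blk_apply N c u)" if "st_vec N u" for u :: "nat\<Rightarrow>real^'s"
    using max_eigen(2)[OF st2 n2 _ mx2] that unfolding q2_def by simp
  have le1: "l \<le> q1" if "l \<in> E" for l
  proof -
    have g: "gram_eigenvalue TYPE('s) N c l" using that unfolding E_def by simp
    obtain w :: "nat \<Rightarrow> real^'s" where w: "st_vec N w" "0 < ip N w w"
      "ip N (blk_apply N c w) (blk_apply N c w) = l * ip N w w"
      by (rule eig_bound_aux[OF g])
    have "l * ip N w w \<le> q1 * ip N w w" using b1[OF w(1)] w(3) by simp
    then show ?thesis using w(2) by simp
  qed
  have le2: "q2 \<le> l" if "l \<in> E" for l
  proof -
    have g: "gram_eigenvalue TYPE('s) N c l" using that unfolding E_def by simp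
    obtain w :: "nat \<Rightarrow> real^'s" where w: "st_vec N w" "0 < ip N w w"
      "ip N (blk_apply N c w) (blk_apply N c w) = l * ip N w w"
      by (rule eig_bound_aux[OF g])
    have "q2 * ip N w w \<le> l * ip N w w" using b2[OF w(1)] w(3) by simp
    then show ?thesis using w(2) by simp
  qed
  have M: "Max E = q1" by (rule Max_eqI[OF fin le1 q1E])
  have m: "Min E = q2" by (rule Min_eqI[OF fin le2 q2E])
  show "\<And>u::nat\<Rightarrow>real^'s. st_vec N u \<Longrightarrow> ip N (blk_apply N c u) (blk_apply N c u) \<le> Max E * ip N u u"
    using b1 M by simp
  show "\<And>u::nat\<Rightarrow>real^'s. st_vec N u \<Longrightarrow> Min E * ip N u u \<le> ip N (blk_apply N c u) (blk_apply N c u)"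
    using b2 m by simp
  show "0 \<le> Min E" unfolding m q2_def by (rule ip_nonneg)
  show "Min E \<le> Max E" unfolding m M using le1[OF q2E] .
qed

definition restr :: "nat \<Rightarrow> (nat \<Rightarrow> real^'s) \<Rightarrow> nat \<Rightarrow> real^'s" where
  "restr N u = (\<lambda>n. if n \<in> {1..N} then u n else 0)"

lemma restr_st: "st_vec N (restr N u)" unfolding st_vec_def restr_def by auto
lemma restr_blk: "blk_apply N c (restr N u) = blk_apply N c u"
  unfolding blk_apply_def restr_def by (rule ext) (auto intro!: sum.cong)
lemma restr_norm: "st_norm N (restr N u) = st_norm N u"
  by (rule st_norm_cong) (simp add: restr_def)

lemma sig_norm:
  fixes c :: "nat \<Rightarrow> nat \<Rightarrow> real" and u :: "nat \<Rightarrow> real^'s"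
  assumes N: "1 \<le> N"
  shows "st_norm N (blk_apply N c u) \<le> sigma_max TYPE('s) N c * st_norm N u"
    and "sigma_min TYPE('s) N c * st_norm N u \<le> st_norm N (blk_apply N c u)"
    and "0 \<le> sigma_min TYPE('s) N c"
    and "sigma_min TYPE('s) N c \<le> sigma_max TYPE('s) N c"
proof -
  define E where "E = {lam. gram_eigenvalue TYPE('s) N c lam}"
  note sp = sigma_props[OF N, where c=c]
  have smax: "sigma_max TYPE('s) N c = sqrt (Max E)" unfolding sigma_max_def E_def ..
  have smin: "sigma_min TYPE('s) N c = sqrt (Min E)" unfolding sigma_min_def E_def ..
  define r where "r = restr N u"
  have st: "st_vec N r" unfolding r_def by (rule restr_st)
  have Mr: "blk_apply N c r = blk_apply N c u" unfolding r_def by (rule restr_blk)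
  have nr: "st_norm N r = st_norm N u" unfolding r_def by (rule restr_norm)
  have ipr: "ip N r r = ip N u u" using nr by (metis st_norm_sq)
  have "st_norm N (blk_apply N c u) = sqrt (ip N (blk_apply N c r) (blk_apply N c r))"
    unfolding Mr st_norm_ip ..
  also have "\<dots> \<le> sqrt (Max E * ip N r r)" using sp(1)[OF st] unfolding E_def by simp
  also have "\<dots> = sigma_max TYPE('s) N c * st_norm N u"
    unfolding smax st_norm_ip ipr by (simp add: real_sqrt_mult)
  finally show "st_norm N (blk_apply N c u) \<le> sigma_max TYPE('s) N c * st_norm N u" .
  have "sigma_min TYPE('s) N c * st_norm N u = sqrt (Min E * ip N r r)"
    unfolding smin st_norm_ip ipr by (simp add: real_sqrt_mult)
  also have "\<dots> \<le> sqrt (ip N (blk_apply N c r) (blk_apply N c r))" using sp(2)[OF st] unfolding E_def by simp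
  also have "\<dots> = st_norm N (blk_apply N c u)" unfolding Mr st_norm_ip ..
  finally show "sigma_min TYPE('s) N c * st_norm N u \<le> st_norm N (blk_apply N c u)" .
  show "0 \<le> sigma_min TYPE('s) N c" unfolding smin E_def using sp(3) by simp
  show "sigma_min TYPE('s) N c \<le> sigma_max TYPE('s) N c" unfolding smin smax E_def using sp(4) by simp
qed



lemma res_diff:
  fixes w y :: "nat \<Rightarrow> real^'s"
  assumes n: "n \<in> {1..Nt}" and kn: "k n \<le> n"
  shows "lm_res f x0 T Nt k alpha beta w n - lm_res f x0 T Nt k alpha beta y n
    = blk_apply Nt (LM_mat k alpha) (\<lambda>m. w m - y m) n
      - (T / real Nt) *\<^sub>R blk_apply Nt (LM_mat k beta)
          (\<lambda>m. f (w m) (real m * (T / real Nt)) - f (y m) (real m * (T / real Nt))) n"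
proof -
  define hA where "hA m = ext0 x0 w m - ext0 x0 y m" for m
  define hB where "hB m = f (ext0 x0 w m) (real m * (T / real Nt)) - f (ext0 x0 y m) (real m * (T / real Nt))" for m
  have hA0: "hA 0 = 0" unfolding hA_def ext0_def by simp
  have hB0: "hB 0 = 0" unfolding hB_def ext0_def by simp
  have eA: "(\<Sum>j=0..k n. alpha n j *\<^sub>R ext0 x0 w (n - j)) - (\<Sum>j=0..k n. alpha n j *\<^sub>R ext0 x0 y (n - j))
      = (\<Sum>j=0..k n. alpha n j *\<^sub>R hA (n - j))"
    unfolding hA_def by (simp add: sum_subtractf scaleR_diff_right)
  also have "\<dots> = (\<Sum>m=1..Nt. LM_mat k alpha n m *\<^sub>R hA m)" by (rule LM_reindex[where h=hA and c=alpha and k=k and n=n and N=Nt, OF n kn hA0])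
  also have "\<dots> = blk_apply Nt (LM_mat k alpha) (\<lambda>m. w m - y m) n"
    unfolding blk_apply_in[OF n] by (intro sum.cong) (auto simp: hA_def ext0_def)
  finally have A: "(\<Sum>j=0..k n. alpha n j *\<^sub>R ext0 x0 w (n - j)) - (\<Sum>j=0..k n. alpha n j *\<^sub>R ext0 x0 y (n - j))
      = blk_apply Nt (LM_mat k alpha) (\<lambda>m. w m - y m) n" .
  have "(\<Sum>j=0..k n. beta n j *\<^sub>R f (ext0 x0 w (n - j)) (real (n - j) * (T / real Nt)))
      - (\<Sum>j=0..k n. beta n j *\<^sub>R f (ext0 x0 y (n - j)) (real (n - j) * (T / real Nt)))
      = (\<Sum>j=0..k n. beta n j *\<^sub>R hB (n - j))"
    unfolding hB_def by (simp add: sum_subtractf scaleR_diff_right)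
  also have "\<dots> = (\<Sum>m=1..Nt. LM_mat k beta n m *\<^sub>R hB m)" by (rule LM_reindex[where h=hB and c=beta and k=k and n=n and N=Nt, OF n kn hB0])
  also have "\<dots> = blk_apply Nt (LM_mat k beta)
          (\<lambda>m. f (w m) (real m * (T / real Nt)) - f (y m) (real m * (T / real Nt))) n"
    unfolding blk_apply_in[OF n] by (intro sum.cong) (auto simp: hB_def ext0_def)
  finally have B: "(\<Sum>j=0..k n. beta n j *\<^sub>R f (ext0 x0 w (n - j)) (real (n - j) * (T / real Nt)))
      - (\<Sum>j=0..k n. beta n j *\<^sub>R f (ext0 x0 y (n - j)) (real (n - j) * (T / real Nt)))
      = blk_apply Nt (LM_mat k beta)
          (\<lambda>m. f (w m) (real m * (T / real Nt)) - f (y m) (real m * (T / real Nt))) n" .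
  show ?thesis unfolding lm_res_def A[symmetric] B[symmetric]
    by (simp add: algebra_simps)
qed



theorem mainTheorem5:
  fixes f :: "real^'s \<Rightarrow> real \<Rightarrow> real^'s"
    and x0 :: "real^'s" and T :: real and Nt :: nat
    and k :: "nat \<Rightarrow> nat" and alpha beta :: "nat \<Rightarrow> nat \<Rightarrow> real"
    and Pi_b :: "nat \<Rightarrow> nat \<Rightarrow> real^'s" and nst :: nat
    and Lf :: real and x xt :: "nat \<Rightarrow> real^'s"
  defines "dt \<equiv> T / real Nt"
    and "S \<equiv> trial_space x0 Pi_b nst"
    and "sA_max \<equiv> sigma_max TYPE('s) Nt (LM_mat k alpha)"
    and "sA_min \<equiv> sigma_min TYPE('s) Nt (LM_mat k alpha)"
    and "sB_max \<equiv> sigma_max TYPE('s) Nt (LM_mat k beta)"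
  assumes T_pos: "0 < T" and Nt_pos: "1 \<le> Nt"
    and k_le: "\<forall>n\<in>{1..Nt}. k n \<le> n"
    and alpha0: "\<forall>n\<in>{1..Nt}. alpha n 0 \<noteq> 0"
    and Lf_pos: "0 < Lf"
    and lip: "\<forall>w y t. t \<in> {0..T} \<longrightarrow> norm (f w t - f y t) \<le> Lf * norm (w - y)"
    and dt_small: "dt * Lf * sB_max < sA_min"
    and x_sol: "\<forall>n\<in>{1..Nt}. lm_res f x0 T Nt k alpha beta x n = 0"
    and xt_in: "xt \<in> S"
    and xt_min: "\<forall>w\<in>S. st_norm Nt (st_res f x0 T Nt k alpha beta xt)
                          \<le> st_norm Nt (st_res f x0 T Nt k alpha beta w)"
  shows "let Lam = (sA_max - sA_min + 2 * dt * Lf * sB_max) / (sA_min - dt * Lf * sB_max) in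
         st_norm Nt (\<lambda>n. x n - xt n) \<le> (1 + Lam) * (INF w\<in>S. st_norm Nt (\<lambda>n. x n - w n))
       \<and> (MAX n\<in>{1..Nt}. norm (x n - xt n))
           \<le> sqrt (real Nt) * (1 + Lam) * (INF w\<in>S. MAX n\<in>{1..Nt}. norm (x n - w n))"
proof -
  have dt_def: "dt = T / real Nt" by (simp add: \<open>dt \<equiv> T / real Nt\<close>)
  have sA_max_def: "sA_max = sigma_max TYPE('s) Nt (LM_mat k alpha)" by (simp add: \<open>sA_max \<equiv> _\<close>)
  have sA_min_def: "sA_min = sigma_min TYPE('s) Nt (LM_mat k alpha)" by (simp add: \<open>sA_min \<equiv> _\<close>)
  have sB_max_def: "sB_max = sigma_max TYPE('s) Nt (LM_mat k beta)" by (simp add: \<open>sB_max \<equiv> _\<close>)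
  define R where "R w = st_res f x0 T Nt k alpha beta w" for w
  have dt_pos: "0 < dt" unfolding dt_def using T_pos Nt_pos by simp
  have sB0: "0 \<le> sB_max" unfolding sB_max_def
    using sig_norm(3,4)[where 's='s, OF Nt_pos, where c="LM_mat k beta"] by linarith
  have sAle: "sA_min \<le> sA_max" unfolding sA_max_def sA_min_def
    using sig_norm(4)[where 's='s, OF Nt_pos, where c="LM_mat k alpha"] .
  define c1 where "c1 = sA_min - dt * Lf * sB_max"
  define c2 where "c2 = sA_max + dt * Lf * sB_max"
  have c1: "0 < c1" unfolding c1_def using dt_small by simp
  have dLs: "0 \<le> dt * Lf * sB_max" using dt_pos Lf_pos sB0 by simp
  have c12: "c1 \<le> c2" unfolding c1_def c2_def using sAle dLs by linarith
  have K: "0 < c2 / c1" using c1 c12 by simp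
  have Lam: "1 + (sA_max - sA_min + 2 * dt * Lf * sB_max) / (sA_min - dt * Lf * sB_max) = c2 / c1"
    using c1 unfolding c1_def c2_def by (simp add: field_simps)
  have key: "c1 * st_norm Nt (\<lambda>n. w n - y n) \<le> st_norm Nt (\<lambda>n. R w n - R y n)
      \<and> st_norm Nt (\<lambda>n. R w n - R y n) \<le> c2 * st_norm Nt (\<lambda>n. w n - y n)"
    for w y :: "nat \<Rightarrow> real^'s"
  proof -
    define D where "D = (\<lambda>m. w m - y m)"
    define E where "E = (\<lambda>m. f (w m) (real m * dt) - f (y m) (real m * dt))"
    define MA where "MA = blk_apply Nt (LM_mat k alpha) D"
    define MB where "MB = blk_apply Nt (LM_mat k beta) E"
    have eq: "st_norm Nt (\<lambda>n. R w n - R y n) = st_norm Nt (\<lambda>n. MA n - dt *\<^sub>R MB n)"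
    proof (rule st_norm_cong)
      fix n assume n: "n \<in> {1..Nt}"
      have "R w n - R y n = lm_res f x0 T Nt k alpha beta w n - lm_res f x0 T Nt k alpha beta y n"
        using n by (simp add: R_def st_res_def)
      also have "\<dots> = MA n - dt *\<^sub>R MB n"
        unfolding res_diff[where n=n and Nt=Nt and k=k and f=f and T=T and alpha=alpha and beta=beta and w=w and y=y, OF n k_le[rule_format, OF n]] MA_def MB_def D_def E_def dt_def ..
      finally show "R w n - R y n = MA n - dt *\<^sub>R MB n" .
    qed
    have EL: "st_norm Nt E \<le> Lf * st_norm Nt D"
    proof -
      have "st_norm Nt E \<le> st_norm Nt (\<lambda>n. Lf *\<^sub>R D n)"
        unfolding st_norm_L2
      proof (rule L2_set_mono)
        fix n assume n: "n \<in> {1..Nt}"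
        have "real n / real Nt \<le> 1" using n by simp
        then have "T * (real n / real Nt) \<le> T" by (rule mult_left_le) (use T_pos in simp)
        then have "real n * dt \<in> {0..T}" unfolding dt_def using T_pos by (auto simp: mult.commute)
        then have "norm (E n) \<le> Lf * norm (D n)" unfolding E_def D_def using lip by blast
        then show "norm (E n) \<le> norm (Lf *\<^sub>R D n)" using Lf_pos by simp
      qed simp
      then show ?thesis using Lf_pos by (simp add: st_norm_scale)
    qed
    have A1: "st_norm Nt MA \<le> sA_max * st_norm Nt D"
      unfolding MA_def sA_max_def by (rule sig_norm(1)[OF Nt_pos])
    have A2: "sA_min * st_norm Nt D \<le> st_norm Nt MA"
      unfolding MA_def sA_min_def by (rule sig_norm(2)[OF Nt_pos])
    have B1: "st_norm Nt MB \<le> sB_max * st_norm Nt E"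
      unfolding MB_def sB_max_def by (rule sig_norm(1)[OF Nt_pos])
    have B2: "st_norm Nt (\<lambda>n. dt *\<^sub>R MB n) \<le> dt * Lf * sB_max * st_norm Nt D"
    proof -
      have "st_norm Nt (\<lambda>n. dt *\<^sub>R MB n) = dt * st_norm Nt MB" using dt_pos by (simp add: st_norm_scale)
      also have "\<dots> \<le> dt * (sB_max * st_norm Nt E)" using B1 dt_pos by (simp add: mult_left_mono)
      also have "\<dots> \<le> dt * (sB_max * (Lf * st_norm Nt D))"
        using EL dt_pos sB0 by (simp add: mult_left_mono)
      finally show ?thesis by (simp add: algebra_simps)
    qed
    have up: "st_norm Nt (\<lambda>n. MA n - dt *\<^sub>R MB n) \<le> st_norm Nt MA + st_norm Nt (\<lambda>n. dt *\<^sub>R MB n)"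
      by (rule st_norm_diff)
    have lo: "st_norm Nt MA - st_norm Nt (\<lambda>n. dt *\<^sub>R MB n) \<le> st_norm Nt (\<lambda>n. MA n - dt *\<^sub>R MB n)"
      by (rule st_norm_diff2)
    have "c1 * st_norm Nt D \<le> st_norm Nt (\<lambda>n. MA n - dt *\<^sub>R MB n)"
      using A2 B2 lo unfolding c1_def by (simp add: algebra_simps)
    moreover have "st_norm Nt (\<lambda>n. MA n - dt *\<^sub>R MB n) \<le> c2 * st_norm Nt D"
      using A1 B2 up unfolding c2_def by (simp add: algebra_simps)
    ultimately show ?thesis unfolding eq D_def by simp
  qed
  have rx0: "R x n = 0" for n
    using x_sol unfolding R_def st_res_def by auto
  have bound: "st_norm Nt (\<lambda>n. x n - xt n) \<le> c2 / c1 * st_norm Nt (\<lambda>n. x n - w n)" if w: "w \<in> S" for w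
  proof -
    have "c1 * st_norm Nt (\<lambda>n. x n - xt n) \<le> st_norm Nt (\<lambda>n. R x n - R xt n)"
      using key[of x xt] by simp
    also have "st_norm Nt (\<lambda>n. R x n - R xt n) = st_norm Nt (R xt)"
      unfolding rx0 st_norm_def by simp
    also have "\<dots> \<le> st_norm Nt (R w)" using xt_min w unfolding R_def by blast
    also have "st_norm Nt (R w) = st_norm Nt (\<lambda>n. R w n - R x n)" unfolding rx0 by simp
    also have "\<dots> \<le> c2 * st_norm Nt (\<lambda>n. w n - x n)" using key[of w x] by simp
    also have "\<dots> = c2 * st_norm Nt (\<lambda>n. x n - w n)" using st_norm_commute[of Nt w x] by simp
    finally have "c1 * st_norm Nt (\<lambda>n. x n - xt n) \<le> c2 * st_norm Nt (\<lambda>n. x n - w n)" .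
    then show ?thesis using c1 by (simp add: field_simps)
  qed
  have Sne: "S \<noteq> {}" using xt_in by blast
  have part1: "st_norm Nt (\<lambda>n. x n - xt n) \<le> c2 / c1 * (INF w\<in>S. st_norm Nt (\<lambda>n. x n - w n))"
  proof -
    have "st_norm Nt (\<lambda>n. x n - xt n) / (c2 / c1) \<le> (INF w\<in>S. st_norm Nt (\<lambda>n. x n - w n))"
    proof (rule cINF_greatest[OF Sne])
      fix w assume "w \<in> S"
      then have h: "st_norm Nt (\<lambda>n. x n - xt n) \<le> st_norm Nt (\<lambda>n. x n - w n) * (c2 / c1)"
        using bound by (simp add: mult.commute)
      show "st_norm Nt (\<lambda>n. x n - xt n) / (c2 / c1) \<le> st_norm Nt (\<lambda>n. x n - w n)"
        by (subst pos_divide_le_eq[OF K]) (rule h)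
    qed
    then have "st_norm Nt (\<lambda>n. x n - xt n) \<le> (INF w\<in>S. st_norm Nt (\<lambda>n. x n - w n)) * (c2 / c1)"
      by (subst (asm) pos_divide_le_eq[OF K])
    then show ?thesis by (simp add: mult.commute)
  qed
  define m where "m w = (MAX n\<in>{1..Nt}. norm (x n - w n))" for w :: "nat \<Rightarrow> real^'s"
  have fin: "finite {1..Nt}" and ne: "{1..Nt} \<noteq> {}" using Nt_pos by auto
  have mge: "norm (x n - w n) \<le> m w" if "n \<in> {1..Nt}" for n w
    unfolding m_def using fin that by (intro Max_ge) auto
  have m0: "0 \<le> m w" for w using mge[of 1 w] Nt_pos by (meson atLeastAtMost_iff le_refl norm_ge_zero order_trans)
  have mle: "m xt \<le> st_norm Nt (\<lambda>n. x n - xt n)"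
    unfolding m_def
  proof (rule Max.boundedI)
    show "finite ((\<lambda>n. norm (x n - xt n)) ` {1..Nt})" using fin by simp
    show "(\<lambda>n. norm (x n - xt n)) ` {1..Nt} \<noteq> {}" using ne by simp
    fix a assume "a \<in> (\<lambda>n. norm (x n - xt n)) ` {1..Nt}"
    then obtain n where n: "n \<in> {1..Nt}" and a: "a = norm (x n - xt n)" by blast
    show "a \<le> st_norm Nt (\<lambda>n. x n - xt n)" unfolding a st_norm_L2
      by (rule member_le_L2_set[OF fin n])
  qed
  have sq: "st_norm Nt (\<lambda>n. x n - w n) \<le> sqrt (real Nt) * m w" for w
  proof -
    have "st_norm Nt (\<lambda>n. x n - w n) \<le> sqrt (\<Sum>n=1..Nt. (m w)\<^sup>2)"
      unfolding st_norm_def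
      by (intro real_sqrt_le_mono sum_mono power_mono mge) auto
    also have "\<dots> = sqrt (real Nt) * m w" using m0[of w] by (simp add: real_sqrt_mult)
    finally show ?thesis .
  qed
  have part2: "m xt \<le> sqrt (real Nt) * (c2 / c1) * (INF w\<in>S. m w)"
  proof -
    have K2: "0 < sqrt (real Nt) * (c2 / c1)" using K Nt_pos by (intro mult_pos_pos) auto
    have "m xt / (sqrt (real Nt) * (c2 / c1)) \<le> (INF w\<in>S. m w)"
    proof (rule cINF_greatest[OF Sne])
      fix w assume w: "w \<in> S"
      have "m xt \<le> c2 / c1 * st_norm Nt (\<lambda>n. x n - w n)" using mle bound[OF w] by linarith
      also have "\<dots> \<le> c2 / c1 * (sqrt (real Nt) * m w)" by (rule mult_left_mono[OF sq[of w]]) (use K in linarith)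
      finally have h: "m xt \<le> m w * (sqrt (real Nt) * (c2 / c1))" by (simp add: algebra_simps)
      show "m xt / (sqrt (real Nt) * (c2 / c1)) \<le> m w"
        by (subst pos_divide_le_eq[OF K2]) (rule h)
    qed
    then have "m xt \<le> (INF w\<in>S. m w) * (sqrt (real Nt) * (c2 / c1))"
      by (subst (asm) pos_divide_le_eq[OF K2])
    then show ?thesis by (simp add: algebra_simps)
  qed
  show ?thesis unfolding Let_def Lam
    using part1 part2 unfolding m_def by simp
qed


end
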